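(* Let $x\mapsto x^{\mu-\nu}\mathbf{L}_\nu(x)/\tilde{t}_{\mu,\nu}(x)$ be considered on $(0,\infty)$. If $-\frac{3}{2}<\nu<\mu$, then this function is strictly increasing on $(0,\infty)$. If either $-3<\mu\leq-\frac{3}{2}$ and $|\nu|<\mu+3$, or $\mu>-\frac{3}{2}$ and $\mu<\nu<\mu+3$, then this function is strictly decreasing on $(0,\infty)$.
   Context: For real $\mu,\nu$ the (normalized) modified Lommel function of the first kind is $$\tilde{t}_{\mu,\nu}(x)=\sum_{k=0}^\infty\frac{(\frac{1}{2}x)^{\mu+2k+1}}{\Gamma\big(k+\frac{\mu-\nu+3}{2}\big)\Gamma\big(k+\frac{\mu+\nu+3}{2}\big)},\quad x>0,$$ and the modified Struve function of the first kind is $$\mathbf{L}_\nu(x)=\sum_{k=0}^\infty\frac{(\frac{1}{2}x)^{2k+\nu+1}}{\Gamma(k+\frac{3}{2})\Gamma(k+\nu+\frac{3}{2})}.$$ *)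

theory Defs
  imports "HOL-Analysis.Analysis"
begin

text \<open>Normalized modified Lommel function of the first kind, with the standard
  convention 1/Gamma = 0 at the poles (reciprocal Gamma function rGamma).\<close>
definition lommel_t :: "real \<Rightarrow> real \<Rightarrow> real \<Rightarrow> real" where
  "lommel_t \<mu> \<nu> x = (\<Sum>k. (x/2) powr (\<mu> + 2 * real k + 1)
      * rGamma (real k + (\<mu> - \<nu> + 3)/2) * rGamma (real k + (\<mu> + \<nu> + 3)/2))"

definition struve_L :: "real \<Rightarrow> real \<Rightarrow> real" where
  "struve_L \<nu> x = (\<Sum>k. (x/2) powr (2 * real k + \<nu> + 1)
      * rGamma (real k + 3/2) * rGamma (real k + \<nu> + 3/2))"

definition ratio_f :: "real \<Rightarrow> real \<Rightarrow> real \<Rightarrow> real" where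
  "ratio_f \<mu> \<nu> x = x powr (\<mu> - \<nu>) * struve_L \<nu> x / lommel_t \<mu> \<nu> x"

end

theory Submission
  imports Defs
begin


lemma rG_pos: "x > (0::real) \<Longrightarrow> rGamma x > 0"
  by (simp add: rGamma_inverse_Gamma)

lemma ratio_summ:
  fixes a :: "nat \<Rightarrow> real"
  assumes pos: "\<And>k. a k > 0" and rec: "\<And>k. (real k + p) * (real k + q) * a (Suc k) = a k"
    and p: "p > 0" and q: "q > 0"
  shows "summable (\<lambda>k. a k * y ^ k)"
proof (rule summable_ratio_test[where c = "1/2" and N = "nat \<lceil>2 * \<bar>y\<bar>\<rceil> + 1"])
  fix n assume n: "n \<ge> nat \<lceil>2 * \<bar>y\<bar>\<rceil> + 1"
  have n1: "real n \<ge> 1" using n by linarith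
  have n2: "real n \<ge> 2 * \<bar>y\<bar>" using n by linarith
  have "(real n + p) * (real n + q) \<ge> real n * real n"
    using p q by (intro mult_mono) auto
  also have "real n * real n \<ge> real n" using n1 by (simp add: mult_le_cancel_left1)
  finally have big: "(real n + p) * (real n + q) \<ge> 2 * \<bar>y\<bar>" using n2 by linarith
  have ppos: "(real n + p) * (real n + q) > 0" using p q by simp
  have as: "a (Suc n) = a n / ((real n + p) * (real n + q))"
    using rec[of n] ppos by (simp add: field_simps)
  have "norm (a (Suc n) * y ^ Suc n) = a n * \<bar>y\<bar> / ((real n + p) * (real n + q)) * \<bar>y\<bar> ^ n"
    using pos[of n] ppos p q by (simp add: as abs_mult power_abs)
  also have "\<dots> \<le> a n * (1/2) * \<bar>y\<bar> ^ n"
  proof -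
    have "\<bar>y\<bar> / ((real n + p) * (real n + q)) \<le> 1/2"
      using big ppos by (simp add: divide_simps)
    then have "a n * (\<bar>y\<bar> / ((real n + p) * (real n + q))) \<le> a n * (1/2)"
      using pos[of n] by (intro mult_left_mono) auto
    then show ?thesis by (intro mult_right_mono) auto
  qed
  also have "\<dots> = 1/2 * norm (a n * y ^ n)"
    using pos[of n] by (simp add: abs_mult power_abs)
  finally show "norm (a (Suc n) * y ^ Suc n) \<le> 1/2 * norm (a n * y ^ n)" .
qed simp

lemma H_nonneg:
  fixes a b :: "nat \<Rightarrow> real"
  assumes a: "\<And>k. a k > 0" and b: "\<And>k. b k > 0" and c: "strict_mono (\<lambda>k. a k / b k)"
    and y: "0 < y" and yz: "y < z"
  shows "0 \<le> (a i * b j - a j * b i) * (z ^ i * y ^ j - z ^ j * y ^ i)"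
proof -
  have key: "a i * b j - a j * b i < 0 \<and> z ^ i * y ^ j - z ^ j * y ^ i < 0" if ij: "i < j" for i j
  proof
    have "a i / b i < a j / b j" using c ij by (simp add: strict_mono_def)
    then show "a i * b j - a j * b i < 0" using b[of i] b[of j] by (simp add: divide_simps)
    have "y ^ (j - i) < z ^ (j - i)" using ij y yz by (intro power_strict_mono) auto
    then have "(z ^ i * y ^ i) * y ^ (j - i) < (z ^ i * y ^ i) * z ^ (j - i)"
      using y yz by (intro mult_strict_left_mono) auto
    moreover have "y ^ j = y ^ i * y ^ (j - i)" "z ^ j = z ^ i * z ^ (j - i)"
      using ij by (simp_all flip: power_add)
    ultimately show "z ^ i * y ^ j - z ^ j * y ^ i < 0" by (simp add: algebra_simps)
  qed
  consider "i < j" | "i = j" | "j < i" by linarith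
  then show ?thesis
  proof cases
    case 1 then show ?thesis using key[OF 1] by (simp add: mult_nonpos_nonpos less_imp_le)
  next
    case 2 then show ?thesis by simp
  next
    case 3
    have "(a i * b j - a j * b i) * (z ^ i * y ^ j - z ^ j * y ^ i) =
          (a j * b i - a i * b j) * (z ^ j * y ^ i - z ^ i * y ^ j)" by algebra
    then show ?thesis using key[OF 3] by (simp add: mult_nonpos_nonpos less_imp_le)
  qed
qed

lemma finite_bk:
  fixes a b :: "nat \<Rightarrow> real"
  assumes a: "\<And>k. a k > 0" and b: "\<And>k. b k > 0" and c: "strict_mono (\<lambda>k. a k / b k)"
    and y: "0 < y" and yz: "y < z" and N: "N \<ge> 2"
  shows "(a 1 * b 0 - a 0 * b 1) * (z - y) \<le>
     (\<Sum>i<N. a i * z ^ i) * (\<Sum>j<N. b j * y ^ j) - (\<Sum>i<N. a i * y ^ i) * (\<Sum>j<N. b j * z ^ j)"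
proof -
  define h where "h i j = (a i * b j - a j * b i) * z ^ i * y ^ j" for i j
  define H where "H i j = (a i * b j - a j * b i) * (z ^ i * y ^ j - z ^ j * y ^ i)" for i j
  have "(\<Sum>i<N. \<Sum>j<N. h i j) = (\<Sum>i<N. \<Sum>j<N. a i * z ^ i * (b j * y ^ j))
          - (\<Sum>i<N. \<Sum>j<N. a j * y ^ j * (b i * z ^ i))"
    by (simp add: h_def sum_subtractf algebra_simps)
  also have "\<dots> = (\<Sum>i<N. a i * z ^ i) * (\<Sum>j<N. b j * y ^ j) - (\<Sum>i<N. a i * y ^ i) * (\<Sum>j<N. b j * z ^ j)"
    by (subst sum.swap[of _ _ "{..<N}"]) (simp add: sum_product)
  finally have e1: "(\<Sum>i<N. \<Sum>j<N. h i j) = \<dots>" .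
  have "2 * (\<Sum>i<N. \<Sum>j<N. h i j) = (\<Sum>i<N. \<Sum>j<N. h i j) + (\<Sum>i<N. \<Sum>j<N. h j i)"
    by (subst (2) sum.swap) simp
  also have "\<dots> = (\<Sum>i<N. \<Sum>j<N. H i j)"
    by (simp add: h_def H_def sum.distrib[symmetric] algebra_simps)
  also have "\<dots> = (\<Sum>p\<in>{..<N} \<times> {..<N}. H (fst p) (snd p))"
    by (simp add: sum.cartesian_product split_def)
  also have "\<dots> \<ge> (\<Sum>p\<in>{(1,0),(0,1)}. H (fst p) (snd p))"
    using N by (intro sum_mono2) (auto simp: H_def intro!: H_nonneg[OF a b c y yz])
  finally have "2 * (\<Sum>i<N. \<Sum>j<N. h i j) \<ge> H 1 0 + H 0 1" by simp
  moreover have "H 1 0 + H 0 1 = 2 * ((a 1 * b 0 - a 0 * b 1) * (z - y))"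
    by (simp add: H_def algebra_simps)
  ultimately show ?thesis using e1 by linarith
qed

lemma bk:
  fixes a b :: "nat \<Rightarrow> real"
  assumes a: "\<And>k. a k > 0" and b: "\<And>k. b k > 0" and c: "strict_mono (\<lambda>k. a k / b k)"
    and sa: "\<And>w. summable (\<lambda>k. a k * w ^ k)" and sb: "\<And>w. summable (\<lambda>k. b k * w ^ k)"
    and y: "0 < y" and yz: "y < z"
  shows "(\<Sum>k. a k * y ^ k) * (\<Sum>k. b k * z ^ k) < (\<Sum>k. a k * z ^ k) * (\<Sum>k. b k * y ^ k)"
proof -
  define \<delta> where "\<delta> = (a 1 * b 0 - a 0 * b 1) * (z - y)"
  have "a 0 / b 0 < a 1 / b 1" using c by (simp add: strict_mono_def)
  then have "a 1 * b 0 - a 0 * b 1 > 0" using b[of 0] b[of 1] by (simp add: divide_simps)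
  then have dpos: "\<delta> > 0" using yz by (simp add: \<delta>_def)
  have lim: "(\<lambda>N. (\<Sum>i<N. a i * z ^ i) * (\<Sum>j<N. b j * y ^ j) - (\<Sum>i<N. a i * y ^ i) * (\<Sum>j<N. b j * z ^ j))
     \<longlonglongrightarrow> (\<Sum>k. a k * z ^ k) * (\<Sum>k. b k * y ^ k) - (\<Sum>k. a k * y ^ k) * (\<Sum>k. b k * z ^ k)"
    by (intro tendsto_intros summable_LIMSEQ sa sb)
  have "\<delta> \<le> (\<Sum>k. a k * z ^ k) * (\<Sum>k. b k * y ^ k) - (\<Sum>k. a k * y ^ k) * (\<Sum>k. b k * z ^ k)"
    by (rule LIMSEQ_le_const[OF lim]) (use finite_bk[OF a b c y yz] in \<open>auto simp: \<delta>_def\<close>)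
  then show ?thesis using dpos by linarith
qed


definition aS :: "real \<Rightarrow> nat \<Rightarrow> real" where
  "aS \<nu> k = rGamma (real k + 3/2) * rGamma (real k + \<nu> + 3/2)"
definition bL :: "real \<Rightarrow> real \<Rightarrow> nat \<Rightarrow> real" where
  "bL \<mu> \<nu> k = rGamma (real k + (\<mu> - \<nu> + 3)/2) * rGamma (real k + (\<mu> + \<nu> + 3)/2)"

lemma rG_rec: "(real k + c) * rGamma (real (Suc k) + c) = rGamma (real k + c)"
proof -
  have "real (Suc k) + c = (real k + c) + 1" by simp
  then show ?thesis by (simp only: rGamma_plus1)
qed

lemma prod_rec:
  "(real k + p) * (real k + q) * (rGamma (real (Suc k) + p) * rGamma (real (Suc k) + q))
    = rGamma (real k + p) * rGamma (real k + q)"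
proof -
  have "(real k + p) * (real k + q) * (rGamma (real (Suc k) + p) * rGamma (real (Suc k) + q))
    = ((real k + p) * rGamma (real (Suc k) + p)) * ((real k + q) * rGamma (real (Suc k) + q))"
    by (simp only: mult_ac)
  also have "\<dots> = rGamma (real k + p) * rGamma (real k + q)" by (simp only: rG_rec)
  finally show ?thesis .
qed

lemma aS_rec: "(real k + 3/2) * (real k + (\<nu> + 3/2)) * aS \<nu> (Suc k) = aS \<nu> k"
  using prod_rec[of k "3/2" "\<nu> + 3/2"] by (simp add: aS_def add.assoc)

lemma bL_rec: "(real k + (\<mu> - \<nu> + 3)/2) * (real k + (\<mu> + \<nu> + 3)/2) * bL \<mu> \<nu> (Suc k) = bL \<mu> \<nu> k"
  using prod_rec[of k "(\<mu> - \<nu> + 3)/2" "(\<mu> + \<nu> + 3)/2"] by (simp add: bL_def)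

lemma cmono:
  fixes a b :: "nat \<Rightarrow> real"
  assumes a: "\<And>k. a k > 0" and b: "\<And>k. b k > 0"
    and ra: "\<And>k. P k * a (Suc k) = a k" and rb: "\<And>k. Q k * b (Suc k) = b k"
    and P: "\<And>k. P k > 0" and PQ: "\<And>k. P k < Q k"
  shows "strict_mono (\<lambda>k. a k / b k)"
proof (rule strict_monoI_Suc)
  fix k
  have Q0: "Q k > 0" using P[of k] PQ[of k] by simp
  have e: "a (Suc k) = a k / P k" "b (Suc k) = b k / Q k"
    using ra[of k] rb[of k] P[of k] Q0 by (auto simp: field_simps)
  have eq: "a (Suc k) / b (Suc k) = (a k / b k) * (Q k / P k)"
    unfolding e using P[of k] Q0 b[of k] by (simp add: field_simps)
  moreover have "Q k / P k > 1" using P[of k] PQ[of k] by simp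
  moreover have "a k / b k > 0" using a[of k] b[of k] by simp
  ultimately have "a k / b k < (a k / b k) * (Q k / P k)"
    by (metis mult.right_neutral mult_strict_left_mono)
  then show "a k / b k < a (Suc k) / b (Suc k)" by (subst eq)
qed

lemma series_repr:
  assumes x: "x > 0" and s: "summable (\<lambda>k. f k * ((x/2)^2)^k)"
  shows "(\<Sum>k. (x/2) powr (2 * real k + c) * f k) = (x/2) powr c * (\<Sum>k. f k * ((x/2)^2)^k)"
proof -
  have "(x/2) powr (2 * real k + c) * f k = (x/2) powr c * (f k * ((x/2)^2)^k)" for k
  proof -
    have "(x/2) powr (2 * real k) = (x/2) powr (real (2*k))" by simp
    also have "\<dots> = (x/2)^(2*k)" by (rule powr_realpow) (use x in simp)
    also have "\<dots> = ((x/2)^2)^k" by (simp add: power_mult)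
    finally show ?thesis using x by (simp add: powr_add)
  qed
  then have "(\<lambda>k. (x/2) powr (2 * real k + c) * f k) = (\<lambda>k. (x/2) powr c * (f k * ((x/2)^2)^k))"
    by (intro ext)
  then show ?thesis by (simp only: suminf_mult[OF s])
qed

lemma aS_pos: "-3/2 < \<nu> \<Longrightarrow> aS \<nu> k > 0"
proof -
  assume nu: "-3/2 < \<nu>"
  have "real k + 3/2 > 0" "real k + \<nu> + 3/2 > 0" using nu by linarith+
  then show ?thesis by (simp add: aS_def rG_pos)
qed

lemma bL_pos: "0 < (\<mu>-\<nu>+3)/2 \<Longrightarrow> 0 < (\<mu>+\<nu>+3)/2 \<Longrightarrow> bL \<mu> \<nu> k > 0"
proof -
  assume al: "0 < (\<mu>-\<nu>+3)/2" and be: "0 < (\<mu>+\<nu>+3)/2"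
  have "real k + (\<mu>-\<nu>+3)/2 > 0" "real k + (\<mu>+\<nu>+3)/2 > 0" using al be by linarith+
  then show ?thesis by (simp add: bL_def rG_pos)
qed

lemma aS_summ: "-3/2 < \<nu> \<Longrightarrow> summable (\<lambda>k. aS \<nu> k * w^k)"
  by (rule ratio_summ[where p = "3/2" and q = "\<nu> + 3/2"]) (auto simp: aS_pos aS_rec)

lemma bL_summ: "0 < (\<mu>-\<nu>+3)/2 \<Longrightarrow> 0 < (\<mu>+\<nu>+3)/2 \<Longrightarrow> summable (\<lambda>k. bL \<mu> \<nu> k * w^k)"
  by (rule ratio_summ[where p = "(\<mu>-\<nu>+3)/2" and q = "(\<mu>+\<nu>+3)/2"]) (auto simp: bL_pos bL_rec)

lemma kpos: "0 < c \<Longrightarrow> 0 < real k + (c::real)"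
  by (simp add: add_nonneg_pos)

lemma alg:
  fixes X K Y P1 P2 a b :: real
  assumes "X = K * Y" "Y * P1 = P2" "P2 > 0"
  shows "X * (P1 * a) / (P2 * b) = K * a / b"
proof (cases "b = 0")
  case False
  have "X * (P1 * a) = K * (Y * P1) * a" using assms(1) by simp
  then show ?thesis using assms False by (simp add: field_simps)
qed simp

lemma repr:
  assumes nu: "-3/2 < \<nu>" and al: "0 < (\<mu>-\<nu>+3)/2" and be: "0 < (\<mu>+\<nu>+3)/2" and x: "x > 0"
  shows "ratio_f \<mu> \<nu> x = 2 powr (\<mu>-\<nu>) * (\<Sum>k. aS \<nu> k * ((x/2)^2)^k) / (\<Sum>k. bL \<mu> \<nu> k * ((x/2)^2)^k)"
proof -
  have sa: "summable (\<lambda>k. aS \<nu> k * w^k)" for w using aS_summ[OF nu] .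
  have sb: "summable (\<lambda>k. bL \<mu> \<nu> k * w^k)" for w using bL_summ[OF al be] .
  have L: "struve_L \<nu> x = (x/2) powr (\<nu>+1) * (\<Sum>k. aS \<nu> k * ((x/2)^2)^k)"
    unfolding struve_L_def using series_repr[OF x sa, of "\<nu>+1"]
    by (simp add: aS_def algebra_simps)
  have T: "lommel_t \<mu> \<nu> x = (x/2) powr (\<mu>+1) * (\<Sum>k. bL \<mu> \<nu> k * ((x/2)^2)^k)"
    unfolding lommel_t_def using series_repr[OF x sb, of "\<mu>+1"]
    by (simp add: bL_def algebra_simps)
  have "x powr (\<mu>-\<nu>) = 2 powr (\<mu>-\<nu>) * (x/2) powr (\<mu>-\<nu>)"
    using x by (simp add: powr_mult[symmetric])
  moreover have "(x/2) powr (\<mu>-\<nu>) * (x/2) powr (\<nu>+1) = (x/2) powr (\<mu>+1)"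
    by (simp add: powr_add[symmetric])
  moreover have "(x/2) powr (\<mu>+1) > 0" using x by simp
  ultimately show ?thesis unfolding ratio_f_def L T
    by (intro alg) auto
qed

lemma main_mono:
  assumes nu: "-3/2 < \<nu>" and al: "0 < (\<mu>-\<nu>+3)/2" and be: "0 < (\<mu>+\<nu>+3)/2"
  shows "(\<forall>k::nat. (real k + 3/2) * (real k + (\<nu> + 3/2)) < (real k + (\<mu> - \<nu> + 3)/2) * (real k + (\<mu> + \<nu> + 3)/2))
           \<longrightarrow> strict_mono_on {0<..} (ratio_f \<mu> \<nu>)"
   and "(\<forall>k::nat. (real k + (\<mu> - \<nu> + 3)/2) * (real k + (\<mu> + \<nu> + 3)/2) < (real k + 3/2) * (real k + (\<nu> + 3/2)))
           \<longrightarrow> strict_antimono_on {0<..} (ratio_f \<mu> \<nu>)"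
proof -
  have apos: "aS \<nu> k > 0" for k using aS_pos[OF nu] .
  have bpos: "bL \<mu> \<nu> k > 0" for k using bL_pos[OF al be] .
  have sa: "summable (\<lambda>k. aS \<nu> k * w^k)" for w using aS_summ[OF nu] .
  have sb: "summable (\<lambda>k. bL \<mu> \<nu> k * w^k)" for w using bL_summ[OF al be] .
  define A where "A y = (\<Sum>k. aS \<nu> k * y^k)" for y
  define B where "B y = (\<Sum>k. bL \<mu> \<nu> k * y^k)" for y
  have Apos: "A y > 0" if "y > 0" for y
    unfolding A_def using that by (intro suminf_pos sa) (simp add: apos)
  have Bpos: "B y > 0" if "y > 0" for y
    unfolding B_def using that by (intro suminf_pos sb) (simp add: bpos)
  have R: "ratio_f \<mu> \<nu> x = 2 powr (\<mu>-\<nu>) * A ((x/2)^2) / B ((x/2)^2)" if "x > 0" for x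
    using repr[OF nu al be that] by (simp add: A_def B_def)
  have yy: "0 < (x/2)^2 \<and> (x/2)^2 < (x'/2)^2" if "0 < x" "x < x'" for x x' :: real
    using that by (auto intro: power_strict_mono)
  show "(\<forall>k::nat. (real k + 3/2) * (real k + (\<nu> + 3/2)) < (real k + (\<mu> - \<nu> + 3)/2) * (real k + (\<mu> + \<nu> + 3)/2))
           \<longrightarrow> strict_mono_on {0<..} (ratio_f \<mu> \<nu>)"
  proof
    assume PQ: "\<forall>k::nat. (real k + 3/2) * (real k + (\<nu> + 3/2)) < (real k + (\<mu> - \<nu> + 3)/2) * (real k + (\<mu> + \<nu> + 3)/2)"
    have c: "strict_mono (\<lambda>k. aS \<nu> k / bL \<mu> \<nu> k)"
      by (rule cmono[where a="aS \<nu>" and b="bL \<mu> \<nu>" and P="\<lambda>k. (real k + 3/2) * (real k + (\<nu> + 3/2))" and Q="\<lambda>k. (real k + (\<mu> - \<nu> + 3)/2) * (real k + (\<mu> + \<nu> + 3)/2)", OF apos bpos aS_rec bL_rec]) (use PQ nu in \<open>auto intro!: mult_pos_pos kpos\<close>)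
    show "strict_mono_on {0<..} (ratio_f \<mu> \<nu>)"
    proof (rule monotone_onI)
      fix x x' :: real assume "x \<in> {0<..}" "x' \<in> {0<..}" "x < x'"
      then have x: "0 < x" "x < x'" by auto
      from yy[OF x] have y: "0 < (x/2)^2" "(x/2)^2 < (x'/2)^2" by auto
      have y': "0 < (x'/2)^2" using y by linarith
      note BB = Bpos[OF y(1)] Bpos[OF y']
      have "A ((x/2)^2) * B ((x'/2)^2) < A ((x'/2)^2) * B ((x/2)^2)"
        unfolding A_def B_def by (rule bk[OF apos bpos c sa sb y])
      then have "A ((x/2)^2) / B ((x/2)^2) < A ((x'/2)^2) / B ((x'/2)^2)"
        using BB by (simp add: divide_simps)
      then have "2 powr (\<mu>-\<nu>) * (A ((x/2)^2) / B ((x/2)^2)) < 2 powr (\<mu>-\<nu>) * (A ((x'/2)^2) / B ((x'/2)^2))"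
        by (intro mult_strict_left_mono) auto
      then show "ratio_f \<mu> \<nu> x < ratio_f \<mu> \<nu> x'"
        using R[of x] R[of x'] x by simp
    qed
  qed
  show "(\<forall>k::nat. (real k + (\<mu> - \<nu> + 3)/2) * (real k + (\<mu> + \<nu> + 3)/2) < (real k + 3/2) * (real k + (\<nu> + 3/2)))
           \<longrightarrow> strict_antimono_on {0<..} (ratio_f \<mu> \<nu>)"
  proof
    assume PQ: "\<forall>k::nat. (real k + (\<mu> - \<nu> + 3)/2) * (real k + (\<mu> + \<nu> + 3)/2) < (real k + 3/2) * (real k + (\<nu> + 3/2))"
    have c: "strict_mono (\<lambda>k. bL \<mu> \<nu> k / aS \<nu> k)"
      by (rule cmono[where b="aS \<nu>" and a="bL \<mu> \<nu>" and Q="\<lambda>k. (real k + 3/2) * (real k + (\<nu> + 3/2))" and P="\<lambda>k. (real k + (\<mu> - \<nu> + 3)/2) * (real k + (\<mu> + \<nu> + 3)/2)", OF bpos apos bL_rec aS_rec]) (use PQ al be in \<open>auto intro!: mult_pos_pos kpos\<close>)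
    show "strict_antimono_on {0<..} (ratio_f \<mu> \<nu>)"
    proof (rule monotone_onI)
      fix x x' :: real assume "x \<in> {0<..}" "x' \<in> {0<..}" "x < x'"
      then have x: "0 < x" "x < x'" by auto
      from yy[OF x] have y: "0 < (x/2)^2" "(x/2)^2 < (x'/2)^2" by auto
      have y': "0 < (x'/2)^2" using y by linarith
      note BB = Bpos[OF y(1)] Bpos[OF y']
      have "B ((x/2)^2) * A ((x'/2)^2) < B ((x'/2)^2) * A ((x/2)^2)"
        unfolding A_def B_def by (rule bk[OF bpos apos c sb sa y])
      then have "A ((x'/2)^2) / B ((x'/2)^2) < A ((x/2)^2) / B ((x/2)^2)"
        using BB by (simp add: divide_simps mult.commute)
      then have "2 powr (\<mu>-\<nu>) * (A ((x'/2)^2) / B ((x'/2)^2)) < 2 powr (\<mu>-\<nu>) * (A ((x/2)^2) / B ((x/2)^2))"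
        by (intro mult_strict_left_mono) auto
      then show "ratio_f \<mu> \<nu> x' < ratio_f \<mu> \<nu> x"
        using R[of x] R[of x'] x by simp
    qed
  qed
qed

theorem theorem3p2:
  fixes \<mu> \<nu> :: real
  shows "(-3/2 < \<nu> \<and> \<nu> < \<mu> \<longrightarrow> strict_mono_on {0<..} (ratio_f \<mu> \<nu>))
       \<and> (((-3 < \<mu> \<and> \<mu> \<le> -3/2 \<and> \<bar>\<nu>\<bar> < \<mu> + 3) \<or> (\<mu> > -3/2 \<and> \<mu> < \<nu> \<and> \<nu> < \<mu> + 3))
          \<longrightarrow> strict_antimono_on {0<..} (ratio_f \<mu> \<nu>))"
proof (intro conjI impI)
  assume h: "-3/2 < \<nu> \<and> \<nu> < \<mu>"
  have al: "0 < (\<mu>-\<nu>+3)/2" "0 < (\<mu>+\<nu>+3)/2" using h by auto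
  have "(real k + 3/2) * (real k + (\<nu> + 3/2)) < (real k + (\<mu> - \<nu> + 3)/2) * (real k + (\<mu> + \<nu> + 3)/2)" for k :: nat
  proof -
    have h1: "-3/2 < \<nu>" and h2: "\<nu> < \<mu>" using h by auto
    have "0 < real k + 3/2" "0 \<le> real k + 3/2" "0 \<le> real k + (\<nu> + 3/2)" using h1 by linarith+
    moreover have "real k + 3/2 < real k + (\<mu> - \<nu> + 3)/2" "real k + (\<nu> + 3/2) < real k + (\<mu> + \<nu> + 3)/2"
      using h2 by (auto simp: field_simps)
    moreover have "0 < real k + (\<mu> - \<nu> + 3)/2" using h1 h2 by (intro kpos) auto
    ultimately show ?thesis by (intro mult_strict_mono) auto
  qed
  then show "strict_mono_on {0<..} (ratio_f \<mu> \<nu>)"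
    using main_mono(1)[of \<nu> \<mu>] h al by auto
next
  assume h: "(-3 < \<mu> \<and> \<mu> \<le> -3/2 \<and> \<bar>\<nu>\<bar> < \<mu> + 3) \<or> (\<mu> > -3/2 \<and> \<mu> < \<nu> \<and> \<nu> < \<mu> + 3)"
  have nu: "-3/2 < \<nu>" and mn: "\<mu> < \<nu>" and al: "0 < (\<mu>-\<nu>+3)/2" "0 < (\<mu>+\<nu>+3)/2" and m3: "0 < \<mu> + 3"
    using h by auto
  have sq: "(\<mu>+3)^2 < (\<nu>+3)^2" using mn m3 by (intro power_strict_mono) auto
  have "(real k + (\<mu> - \<nu> + 3)/2) * (real k + (\<mu> + \<nu> + 3)/2) < (real k + 3/2) * (real k + (\<nu> + 3/2))" for k :: nat
  proof -
    have e1: "(real k + (\<mu> - \<nu> + 3)/2) * (real k + (\<mu> + \<nu> + 3)/2) = real k ^ 2 + (\<mu>+3) * real k + ((\<mu>+3)^2 - \<nu>^2)/4"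
      by (simp add: power2_eq_square field_simps)
    have e2: "(real k + 3/2) * (real k + (\<nu> + 3/2)) = real k ^ 2 + (\<nu>+3) * real k + ((\<nu>+3)^2 - \<nu>^2)/4"
      by (simp add: power2_eq_square field_simps)
    have "(\<mu>+3) * real k \<le> (\<nu>+3) * real k" using mn by (intro mult_right_mono) auto
    moreover have "((\<mu>+3)^2 - \<nu>^2)/4 < ((\<nu>+3)^2 - \<nu>^2)/4" using sq by (simp add: divide_strict_right_mono)
    ultimately show ?thesis unfolding e1 e2 by (intro add_le_less_mono add_left_mono)
  qed
  then show "strict_antimono_on {0<..} (ratio_f \<mu> \<nu>)"
    using main_mono(2)[of \<nu> \<mu>] nu al by auto
qed

end
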